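(* For every positive integer $n$, the polynomial in $q$ $$\binom{2n}{n}_q\;-\;\prod_{i=1}^{n}\bigl(1+q^{2i-1}\bigr)\;=\;\sum_{k=0}^{n^2}\bigl(p_k(n,n)-b_k(n)\bigr)q^k$$ is symmetric and unimodal, i.e. its coefficients $c_k=p_k(n,n)-b_k(n)$ satisfy $c_k=c_{n^2-k}$ and $c_0\le c_1\le\cdots\le c_{\lfloor n^2/2\rfloor}\ge\cdots\ge c_{n^2}$.
   Context: $\binom{2n}{n}_q=\prod_{i=1}^{n}\frac{q^{n+i}-1}{q^i-1}$ is the Gaussian ($q$-binomial) coefficient, and $p_k(n,n)$ is the number of partitions of $k$ fitting inside an $n\times n$ square, so that $\binom{2n}{n}_q=\sum_k p_k(n,n)q^k$. $b_k(n)$ is the number of partitions of $k$ into distinct odd parts each at most $2n-1$, so that $\prod_{i=1}^n(1+q^{2i-1})=\sum_k b_k(n)q^k$. *)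

theory Defs
  imports "HOL-Computational_Algebra.Polynomial"
begin

(* Gaussian binomial [2n choose n]_q = prod_{i=1}^n (q^(n+i) - 1)/(q^i - 1),
   as a polynomial with integer coefficients (the division is exact). *)
definition gauss_binom_2n_n :: "nat \<Rightarrow> int poly" where
  "gauss_binom_2n_n n =
     (\<Prod>i=1..n. monom 1 (n+i) - 1) div (\<Prod>i=1..n. monom 1 i - 1)"

definition odd_dist_prod :: "nat \<Rightarrow> int poly" where
  "odd_dist_prod n = (\<Prod>i=1..n. 1 + monom 1 (2*i - 1))"

end

theory Submission
  imports Defs
begin


definition dc :: "(nat \<times> nat) set \<Rightarrow> bool" where
  "dc S \<longleftrightarrow> (\<forall>i j i' j'. (i,j) \<in> S \<longrightarrow> i' \<le> i \<longrightarrow> j' \<le> j \<longrightarrow> (i',j') \<in> S)"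

definition Xb :: "nat \<Rightarrow> nat \<Rightarrow> (nat \<times> nat) set set" where
  "Xb m n = {S. S \<subseteq> {0..<m} \<times> {0..<n} \<and> dc S}"

definition Gp :: "nat \<Rightarrow> nat \<Rightarrow> int poly" where
  "Gp m n = (\<Sum>S\<in>Xb m n. monom 1 (card S))"

lemma finite_Xb: "finite (Xb m n)"
proof -
  have "Xb m n \<subseteq> Pow ({0..<m} \<times> {0..<n})" by (auto simp: Xb_def)
  thus ?thesis by (rule finite_subset) auto
qed

lemma Xb_finite_mem: "S \<in> Xb m n \<Longrightarrow> finite S"
  unfolding Xb_def by (auto intro: finite_subset)

lemma Xb_0: "Xb 0 n = {{}}" "Xb m 0 = {{}}"
  by (auto simp: Xb_def dc_def)

lemma Gp_0: "Gp 0 n = 1" "Gp m 0 = 1"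
  by (simp_all add: Gp_def Xb_0)

definition shr :: "nat \<Rightarrow> (nat \<times> nat) set \<Rightarrow> (nat \<times> nat) set" where
  "shr n T = {(i,j). (i = 0 \<and> j \<le> n) \<or> (i > 0 \<and> (i - 1, j) \<in> T)}"

lemma card_shr:
  assumes "finite T" shows "card (shr n T) = Suc n + card T"
proof -
  have e: "shr n T = ({0} \<times> {0..n}) \<union> (\<lambda>(i,j). (Suc i, j)) ` T"
  proof (rule set_eqI)
    fix c :: "nat \<times> nat"
    obtain i j where c: "c = (i,j)" by (cases c)
    show "c \<in> shr n T \<longleftrightarrow> c \<in> ({0} \<times> {0..n}) \<union> (\<lambda>(i,j). (Suc i, j)) ` T"
    proof (cases i)
      case 0 thus ?thesis using c by (auto simp: shr_def)
    next
      case (Suc i') thus ?thesis using c unfolding shr_def by (auto simp: image_iff intro!: bexI[of _ "(i',j)"] split: prod.splits)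
    qed
  qed
  have "card (({0} \<times> {0..n}) \<union> (\<lambda>(i,j). (Suc i, j)) ` T)
     = card ({0::nat} \<times> {0..n}) + card ((\<lambda>(i,j). (Suc i, j)) ` T)"
    by (rule card_Un_disjoint) (auto simp: assms)
  also have "card ((\<lambda>(i,j). (Suc i, j)) ` T) = card T"
    by (rule card_image) (auto simp: inj_on_def)
  finally show ?thesis using e by (simp add: card_cartesian_product)
qed

lemma Gp_rec: "Gp (Suc m) (Suc n) = Gp (Suc m) n + monom 1 (Suc n) * Gp m (Suc n)"
proof -
  let ?A = "{S \<in> Xb (Suc m) (Suc n). (0,n) \<notin> S}"
  let ?B = "{S \<in> Xb (Suc m) (Suc n). (0,n) \<in> S}"
  have A: "?A = Xb (Suc m) n"
  proof (rule set_eqI, rule iffI)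
    fix S assume "S \<in> ?A"
    hence S: "S \<in> Xb (Suc m) (Suc n)" "(0,n) \<notin> S" by auto
    show "S \<in> Xb (Suc m) n" unfolding Xb_def
    proof (intro CollectI conjI subsetI)
      show "dc S" using S by (simp add: Xb_def)
      fix c assume "c \<in> S"
      then obtain i j where c: "c = (i,j)" "(i,j) \<in> S" by (cases c) auto
      have "j \<noteq> n"
      proof
        assume "j = n"
        hence "(0,n) \<in> S" using S(1) c unfolding Xb_def dc_def by blast
        thus False using S(2) by simp
      qed
      moreover have "(i,j) \<in> {0..<Suc m} \<times> {0..<Suc n}" using S(1) c unfolding Xb_def by blast
      ultimately show "c \<in> {0..<Suc m} \<times> {0..<n}" using c by (auto simp: less_Suc_eq)
    qed
  next
    fix S assume "S \<in> Xb (Suc m) n" thus "S \<in> ?A" by (auto simp: Xb_def)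
  qed
  have bij: "bij_betw (shr n) (Xb m (Suc n)) ?B"
  proof (rule bij_betw_byWitness[where f' = "\<lambda>S. {(i,j). (Suc i, j) \<in> S}"])
    show "\<forall>T\<in>Xb m (Suc n). {(i,j). (Suc i, j) \<in> shr n T} = T"
      by (auto simp: shr_def)
    show "\<forall>S\<in>?B. shr n {(i,j). (Suc i, j) \<in> S} = S"
    proof (intro ballI)
      fix S assume "S \<in> ?B"
      hence S: "S \<in> Xb (Suc m) (Suc n)" "(0,n) \<in> S" by auto
      show "shr n {(i,j). (Suc i, j) \<in> S} = S"
      proof (rule set_eqI)
        fix c :: "nat \<times> nat"
        obtain i j where c: "c = (i,j)" by (cases c)
        have "(i,j) \<in> S \<Longrightarrow> (i,j) \<in> shr n {(i,j). (Suc i, j) \<in> S}"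
          using S unfolding shr_def Xb_def by (cases i) auto
        moreover have "(i,j) \<in> shr n {(i,j). (Suc i, j) \<in> S} \<Longrightarrow> (i,j) \<in> S"
          using S unfolding shr_def Xb_def dc_def by auto
        ultimately show "c \<in> shr n {(i,j). (Suc i, j) \<in> S} \<longleftrightarrow> c \<in> S" using c by blast
      qed
    qed
    show "shr n ` Xb m (Suc n) \<subseteq> ?B"
    proof (intro subsetI, elim imageE)
      fix T S assume T: "T \<in> Xb m (Suc n)" and ST: "S = shr n T"
      have "(0,n) \<in> shr n T" by (simp add: shr_def)
      moreover have "shr n T \<in> Xb (Suc m) (Suc n)" unfolding Xb_def
      proof (intro CollectI conjI subsetI)
        fix c assume "c \<in> shr n T" thus "c \<in> {0..<Suc m} \<times> {0..<Suc n}"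
          using T unfolding shr_def Xb_def by auto
      next
        show "dc (shr n T)" unfolding dc_def
        proof (intro allI impI)
          fix i j i' j' assume h: "(i,j) \<in> shr n T" "i' \<le> i" "j' \<le> j"
          show "(i',j') \<in> shr n T"
          proof (cases "i' = 0")
            case True
            have "j \<le> n" using h(1) T unfolding shr_def Xb_def by auto
            thus ?thesis using True h by (simp add: shr_def)
          next
            case False
            hence "i > 0" "(i-1,j) \<in> T" using h unfolding shr_def by auto
            hence "(i'-1,j') \<in> T" using T h(2,3) unfolding Xb_def dc_def by auto
            thus ?thesis using False by (simp add: shr_def)
          qed
        qed
      qed
      ultimately show "S \<in> ?B" using ST by simp
    qed
    show "(\<lambda>S. {(i,j). (Suc i, j) \<in> S}) ` ?B \<subseteq> Xb m (Suc n)"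
    proof (intro subsetI, elim imageE)
      fix S R assume "S \<in> ?B" "R = {(i,j). (Suc i, j) \<in> S}"
      thus "R \<in> Xb m (Suc n)" unfolding Xb_def dc_def by auto
    qed
  qed
  have U: "Xb (Suc m) (Suc n) = ?A \<union> ?B" by auto
  have "Gp (Suc m) (Suc n) = (\<Sum>S\<in>?A \<union> ?B. monom 1 (card S))" unfolding Gp_def using U by simp
  also have "\<dots> = (\<Sum>S\<in>?A. monom 1 (card S)) + (\<Sum>S\<in>?B. monom 1 (card S))"
    by (rule sum.union_disjoint) (auto intro: finite_subset[OF _ finite_Xb])
  also have "(\<Sum>S\<in>?A. monom 1 (card S)) = Gp (Suc m) n" by (simp add: A Gp_def)
  also have "(\<Sum>S\<in>?B. monom 1 (card S)) = (\<Sum>T\<in>Xb m (Suc n). monom 1 (card (shr n T)))"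
    by (rule sum.reindex_bij_betw[OF bij, symmetric])
  also have "\<dots> = (\<Sum>T\<in>Xb m (Suc n). monom (1::int) (Suc n) * monom 1 (card T))"
    by (rule sum.cong) (auto simp: card_shr Xb_finite_mem mult_monom)
  also have "\<dots> = monom 1 (Suc n) * Gp m (Suc n)" by (simp add: Gp_def sum_distrib_left)
  finally show ?thesis .
qed

definition Dn :: "nat \<Rightarrow> int poly" where
  "Dn a = (\<Prod>i<a. monom 1 (Suc i) - 1)"
definition Hn :: "nat \<Rightarrow> nat \<Rightarrow> int poly" where
  "Hn a b = (\<Prod>i<a. monom 1 (b + Suc i) - 1)"

lemma Gp_Dn: "Gp a b * Dn a = Hn a b"
proof (induction a arbitrary: b)
  case 0 thus ?case by (simp add: Gp_0 Dn_def Hn_def)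
next
  case (Suc a)
  note IHa = Suc.IH
  show ?case
  proof (induction b)
    case 0 thus ?case by (simp add: Gp_0 Dn_def Hn_def)
  next
    case (Suc b)
    have h1: "Hn (Suc a) b = (monom 1 (Suc b) - 1) * Hn a (Suc b)"
      unfolding Hn_def by (subst prod.lessThan_Suc_shift) simp
    have h2: "Hn (Suc a) (Suc b) = Hn a (Suc b) * (monom 1 (Suc b + Suc a) - 1)"
      unfolding Hn_def by simp
    have d: "Dn (Suc a) = Dn a * (monom 1 (Suc a) - 1)" unfolding Dn_def by simp
    have m: "monom (1::int) (Suc b + Suc a) = monom 1 (Suc b) * monom 1 (Suc a)"
      by (simp add: mult_monom)
    have "Gp (Suc a) (Suc b) * Dn (Suc a)
        = Gp (Suc a) b * Dn (Suc a) + monom 1 (Suc b) * (Gp a (Suc b) * Dn a) * (monom 1 (Suc a) - 1)"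
      by (simp add: Gp_rec d algebra_simps)
    also have "\<dots> = (monom 1 (Suc b) - 1) * Hn a (Suc b) + monom 1 (Suc b) * Hn a (Suc b) * (monom 1 (Suc a) - 1)"
      using IHa[of "Suc b"] Suc.IH h1 by simp
    also have "\<dots> = Hn a (Suc b) * (monom 1 (Suc b) * monom 1 (Suc a) - 1)"
      by (simp add: algebra_simps)
    also have "\<dots> = Hn (Suc a) (Suc b)" using h2 m by simp
    finally show ?case .
  qed
qed

lemma Dn_nz: "Dn a \<noteq> 0"
proof -
  have "monom (1::int) (Suc i) - 1 \<noteq> 0" for i
  proof
    assume "monom (1::int) (Suc i) - 1 = 0"
    hence "coeff (monom (1::int) (Suc i) - 1) 0 = 0" by simp
    thus False by simp
  qed
  thus ?thesis unfolding Dn_def by (simp add: prod_zero_iff)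
qed

lemma gauss_eq: "gauss_binom_2n_n n = Gp n n"
proof -
  have "(\<Prod>i=1..n. monom 1 (n+i) - 1) = Hn n n"
    unfolding Hn_def by (simp add: prod.atLeast1_atMost_eq[simplified])
  moreover have "(\<Prod>i=1..n. monom 1 i - 1) = Dn n"
    unfolding Dn_def by (simp add: prod.atLeast1_atMost_eq[simplified])
  ultimately show ?thesis unfolding gauss_binom_2n_n_def
    using Gp_Dn[of n n] Dn_nz[of n] by (metis nonzero_mult_div_cancel_right)
qed



definition symm :: "(nat \<times> nat) set \<Rightarrow> bool" where
  "symm S \<longleftrightarrow> (\<forall>i j. (i,j) \<in> S \<longrightarrow> (j,i) \<in> S)"

definition Yb :: "nat \<Rightarrow> (nat \<times> nat) set set" where
  "Yb n = {S \<in> Xb n n. symm S}"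

definition SCp :: "nat \<Rightarrow> int poly" where
  "SCp n = (\<Sum>S\<in>Yb n. monom 1 (card S))"

definition hk :: "nat \<Rightarrow> (nat \<times> nat) set \<Rightarrow> (nat \<times> nat) set" where
  "hk n T = {(i,j). (i = 0 \<and> j \<le> n) \<or> (j = 0 \<and> i \<le> n) \<or> (i > 0 \<and> j > 0 \<and> (i - 1, j - 1) \<in> T)}"

lemma finite_Yb: "finite (Yb n)"
  unfolding Yb_def using finite_Xb by auto

lemma card_hk:
  assumes "finite T" shows "card (hk n T) = 2*n + 1 + card T"
proof -
  have e: "hk n T = (({0} \<times> {0..n}) \<union> ({1..n} \<times> {0})) \<union> (\<lambda>(i,j). (Suc i, Suc j)) ` T"
  proof (rule set_eqI)
    fix c :: "nat \<times> nat"
    obtain i j where c: "c = (i,j)" by (cases c)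
    show "c \<in> hk n T \<longleftrightarrow> c \<in> (({0} \<times> {0..n}) \<union> ({1..n} \<times> {0})) \<union> (\<lambda>(i,j). (Suc i, Suc j)) ` T"
    proof (cases i)
      case 0 thus ?thesis using c by (auto simp: hk_def)
    next
      case (Suc i')
      show ?thesis
      proof (cases j)
        case 0 thus ?thesis using c Suc by (auto simp: hk_def)
      next
        case (Suc j')
        thus ?thesis using c \<open>i = Suc i'\<close> unfolding hk_def
          by (auto simp: image_iff intro!: bexI[of _ "(i',j')"] split: prod.splits)
      qed
    qed
  qed
  have "card ((({0} \<times> {0..n}) \<union> ({1..n} \<times> {0})) \<union> (\<lambda>(i,j). (Suc i, Suc j)) ` T)
     = card (({0::nat} \<times> {0..n}) \<union> ({1..n} \<times> {0::nat})) + card ((\<lambda>(i,j). (Suc i, Suc j)) ` T)"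
    by (rule card_Un_disjoint) (auto simp: assms)
  also have "card ((\<lambda>(i,j). (Suc i, Suc j)) ` T) = card T"
    by (rule card_image) (auto simp: inj_on_def)
  also have "card (({0::nat} \<times> {0..n}) \<union> ({1..n} \<times> {0::nat})) = card ({0::nat} \<times> {0..n}) + card ({1..n} \<times> {0::nat})"
    by (rule card_Un_disjoint) auto
  finally show ?thesis using e by (simp add: card_cartesian_product)
qed

lemma SCp_rec: "SCp (Suc n) = SCp n + monom 1 (2*n+1) * SCp n"
proof -
  let ?A = "{S \<in> Yb (Suc n). (0,n) \<notin> S}"
  let ?B = "{S \<in> Yb (Suc n). (0,n) \<in> S}"
  have A: "?A = Yb n"
  proof (rule set_eqI, rule iffI)
    fix S assume "S \<in> ?A"
    hence S: "S \<in> Xb (Suc n) (Suc n)" "symm S" "(0,n) \<notin> S" by (auto simp: Yb_def)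
    have "S \<in> Xb n n" unfolding Xb_def
    proof (intro CollectI conjI subsetI)
      show "dc S" using S by (simp add: Xb_def)
      fix c assume "c \<in> S"
      then obtain i j where c: "c = (i,j)" "(i,j) \<in> S" by (cases c) auto
      have "j \<noteq> n"
      proof
        assume "j = n"
        hence "(0,n) \<in> S" using S(1) c unfolding Xb_def dc_def by blast
        thus False using S(3) by simp
      qed
      moreover have "i \<noteq> n"
      proof
        assume "i = n"
        hence "(j,n) \<in> S" using S(2) c unfolding symm_def by blast
        hence "(0,n) \<in> S" using S(1) unfolding Xb_def dc_def by blast
        thus False using S(3) by simp
      qed
      moreover have "(i,j) \<in> {0..<Suc n} \<times> {0..<Suc n}" using S(1) c unfolding Xb_def by blast
      ultimately show "c \<in> {0..<n} \<times> {0..<n}" using c by (auto simp: less_Suc_eq)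
    qed
    thus "S \<in> Yb n" using S by (simp add: Yb_def)
  next
    fix S assume "S \<in> Yb n" thus "S \<in> ?A" by (auto simp: Yb_def Xb_def)
  qed
  have bij: "bij_betw (hk n) (Yb n) ?B"
  proof (rule bij_betw_byWitness[where f' = "\<lambda>S. {(i,j). (Suc i, Suc j) \<in> S}"])
    show "\<forall>T\<in>Yb n. {(i,j). (Suc i, Suc j) \<in> hk n T} = T"
      by (auto simp: hk_def)
    show "\<forall>S\<in>?B. hk n {(i,j). (Suc i, Suc j) \<in> S} = S"
    proof (intro ballI)
      fix S assume "S \<in> ?B"
      hence S: "S \<in> Xb (Suc n) (Suc n)" "symm S" "(0,n) \<in> S" by (auto simp: Yb_def)
      have n0: "(n,0) \<in> S" using S unfolding symm_def by blast
      show "hk n {(i,j). (Suc i, Suc j) \<in> S} = S"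
      proof (rule set_eqI)
        fix c :: "nat \<times> nat"
        obtain i j where c: "c = (i,j)" by (cases c)
        have "(i,j) \<in> S \<Longrightarrow> (i,j) \<in> hk n {(i,j). (Suc i, Suc j) \<in> S}"
          using S unfolding hk_def Xb_def by (cases i; cases j) auto
        moreover have "(i,j) \<in> hk n {(i,j). (Suc i, Suc j) \<in> S} \<Longrightarrow> (i,j) \<in> S"
          using S n0 unfolding hk_def Xb_def dc_def by auto
        ultimately show "c \<in> hk n {(i,j). (Suc i, Suc j) \<in> S} \<longleftrightarrow> c \<in> S" using c by blast
      qed
    qed
    show "hk n ` Yb n \<subseteq> ?B"
    proof (intro subsetI, elim imageE)
      fix T S assume T: "T \<in> Yb n" and ST: "S = hk n T"
      have T1: "T \<in> Xb n n" "symm T" using T by (auto simp: Yb_def)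
      have "(0,n) \<in> hk n T" by (simp add: hk_def)
      moreover have "hk n T \<in> Xb (Suc n) (Suc n)" unfolding Xb_def
      proof (intro CollectI conjI subsetI)
        fix c assume "c \<in> hk n T" thus "c \<in> {0..<Suc n} \<times> {0..<Suc n}"
          using T1 unfolding hk_def Xb_def by auto
      next
        show "dc (hk n T)" unfolding dc_def
        proof (intro allI impI)
          fix i j i' j' assume h: "(i,j) \<in> hk n T" "i' \<le> i" "j' \<le> j"
          have b: "i \<le> n" "j \<le> n" using h(1) T1 unfolding hk_def Xb_def by auto
          show "(i',j') \<in> hk n T"
          proof (cases "i' = 0 \<or> j' = 0")
            case True
            thus ?thesis using b h by (auto simp: hk_def)
          next
            case False
            hence "i > 0" "j > 0" "(i-1,j-1) \<in> T" using h unfolding hk_def by auto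
            hence "(i'-1,j'-1) \<in> T" using T1 h(2,3) unfolding Xb_def dc_def by auto
            thus ?thesis using False by (simp add: hk_def)
          qed
        qed
      qed
      moreover have "symm (hk n T)" using T1(2) unfolding symm_def hk_def by auto
      ultimately show "S \<in> ?B" using ST by (simp add: Yb_def)
    qed
    show "(\<lambda>S. {(i,j). (Suc i, Suc j) \<in> S}) ` ?B \<subseteq> Yb n"
    proof (intro subsetI, elim imageE)
      fix S R assume "S \<in> ?B" "R = {(i,j). (Suc i, Suc j) \<in> S}"
      hence S: "S \<in> Xb (Suc n) (Suc n)" "symm S" and R: "R = {(i,j). (Suc i, Suc j) \<in> S}" by (auto simp: Yb_def)
      have "R \<subseteq> {0..<n} \<times> {0..<n}"
      proof
        fix c assume "c \<in> R"
        then obtain i j where "c = (i,j)" "(Suc i, Suc j) \<in> S" using R by auto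
        thus "c \<in> {0..<n} \<times> {0..<n}" using S(1) unfolding Xb_def by auto
      qed
      moreover have "dc R" unfolding dc_def
      proof (intro allI impI)
        fix i j i' j' assume "(i,j) \<in> R" "i' \<le> i" "j' \<le> j"
        hence h: "(Suc i, Suc j) \<in> S" "Suc i' \<le> Suc i" "Suc j' \<le> Suc j" using R by auto
        have "dc S" using S(1) by (simp add: Xb_def)
        hence "(Suc i', Suc j') \<in> S" using h unfolding dc_def by blast
        thus "(i',j') \<in> R" using R by simp
      qed
      moreover have "symm R" using S(2) R unfolding symm_def by auto
      ultimately show "R \<in> Yb n" by (simp add: Yb_def Xb_def)
    qed
  qed
  have U: "Yb (Suc n) = ?A \<union> ?B" by auto
  have "SCp (Suc n) = (\<Sum>S\<in>?A \<union> ?B. monom 1 (card S))" unfolding SCp_def using U by simp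
  also have "\<dots> = (\<Sum>S\<in>?A. monom 1 (card S)) + (\<Sum>S\<in>?B. monom 1 (card S))"
    by (rule sum.union_disjoint) (auto intro: finite_subset[OF _ finite_Yb])
  also have "(\<Sum>S\<in>?A. monom 1 (card S)) = SCp n" by (simp add: A SCp_def)
  also have "(\<Sum>S\<in>?B. monom 1 (card S)) = (\<Sum>T\<in>Yb n. monom 1 (card (hk n T)))"
    by (rule sum.reindex_bij_betw[OF bij, symmetric])
  also have "\<dots> = (\<Sum>T\<in>Yb n. monom (1::int) (2*n+1) * monom 1 (card T))"
    by (rule sum.cong) (auto simp: card_hk Yb_def Xb_finite_mem mult_monom)
  also have "\<dots> = monom 1 (2*n+1) * SCp n" by (simp add: SCp_def sum_distrib_left)
  finally show ?thesis .
qed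

lemma odd_eq: "odd_dist_prod n = SCp n"
proof (induction n)
  case 0
  have "Yb 0 = {{}}" by (auto simp: Yb_def Xb_0 symm_def)
  thus ?case by (simp add: odd_dist_prod_def SCp_def)
next
  case (Suc n)
  have "odd_dist_prod (Suc n) = odd_dist_prod n * (1 + monom 1 (2*n+1))"
    unfolding odd_dist_prod_def by simp
  thus ?case using Suc by (simp add: SCp_rec algebra_simps)
qed



lemma coeff_sum_card:
  assumes "finite A"
  shows "coeff (\<Sum>S\<in>A. monom (1::int) (card S)) k = int (card {S\<in>A. card S = k})"
proof -
  have "coeff (\<Sum>S\<in>A. monom (1::int) (card S)) k = (\<Sum>S\<in>A. if card S = k then 1 else 0)"
    by (simp add: coeff_sum)
  also have "\<dots> = (\<Sum>S\<in>{S\<in>A. card S = k}. 1)"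
    by (rule sum.inter_filter[OF assms, symmetric])
  finally show ?thesis by simp
qed

definition NS :: "nat \<Rightarrow> nat \<Rightarrow> (nat \<times> nat) set set" where
  "NS n k = {S \<in> Xb n n. \<not> symm S \<and> card S = k}"

lemma finite_NS: "finite (NS n k)"
  unfolding NS_def using finite_Xb by auto

lemma coeffP: "coeff (Gp n n - SCp n) k = int (card (NS n k))"
proof -
  let ?A = "{S\<in>Xb n n. card S = k}"
  let ?B = "{S\<in>Yb n. card S = k}"
  have sub: "?B \<subseteq> ?A" by (auto simp: Yb_def)
  have fA: "finite ?A" using finite_Xb by auto
  have eq: "?A - ?B = NS n k" by (auto simp: NS_def Yb_def)
  have "card ?B \<le> card ?A" by (rule card_mono[OF fA sub])
  moreover have "card (?A - ?B) = card ?A - card ?B" by (rule card_Diff_subset[OF finite_subset[OF sub fA] sub])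
  ultimately have "int (card (NS n k)) = int (card ?A) - int (card ?B)" using eq by simp
  thus ?thesis unfolding Gp_def SCp_def
    by (simp add: coeff_diff coeff_sum_card finite_Xb finite_Yb)
qed

lemma card_Xb_le: "S \<in> Xb n n \<Longrightarrow> card S \<le> n * n"
proof -
  assume "S \<in> Xb n n"
  hence "S \<subseteq> {0..<n} \<times> {0..<n}" by (simp add: Xb_def)
  hence "card S \<le> card ({0..<n} \<times> {0..<n})" by (rule card_mono[rotated]) simp
  thus ?thesis by (simp add: card_cartesian_product)
qed

lemma NS_big: "k > n * n \<Longrightarrow> NS n k = {}"
  using card_Xb_le unfolding NS_def by fastforce

definition rot :: "nat \<Rightarrow> nat \<times> nat \<Rightarrow> nat \<times> nat" where
  "rot n c = (n - 1 - fst c, n - 1 - snd c)"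

definition cmpl :: "nat \<Rightarrow> (nat \<times> nat) set \<Rightarrow> (nat \<times> nat) set" where
  "cmpl n S = {c \<in> {0..<n} \<times> {0..<n}. rot n c \<notin> S}"

lemma rot_rot: "c \<in> {0..<n} \<times> {0..<n} \<Longrightarrow> rot n (rot n c) = c"
  by (cases c) (auto simp: rot_def)

lemma rot_in: "c \<in> {0..<n} \<times> {0..<n} \<Longrightarrow> rot n c \<in> {0..<n} \<times> {0..<n}"
  by (cases c) (auto simp: rot_def)

lemma comp_Xb: assumes "S \<in> Xb n n" shows "cmpl n S \<in> Xb n n"
proof -
  have "dc (cmpl n S)" unfolding dc_def
  proof (intro allI impI)
    fix i j i' j' assume h: "(i,j) \<in> cmpl n S" "i' \<le> i" "j' \<le> j"
    hence b: "i < n" "j < n" "(n-1-i, n-1-j) \<notin> S" by (auto simp: cmpl_def rot_def)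
    have "(n-1-i', n-1-j') \<notin> S"
    proof
      assume "(n-1-i', n-1-j') \<in> S"
      moreover have "n-1-i \<le> n-1-i'" "n-1-j \<le> n-1-j'" using h by auto
      ultimately have "(n-1-i, n-1-j) \<in> S" using assms unfolding Xb_def dc_def by blast
      thus False using b by simp
    qed
    thus "(i',j') \<in> cmpl n S" using b h by (auto simp: cmpl_def rot_def)
  qed
  thus ?thesis by (auto simp: Xb_def cmpl_def)
qed

lemma comp_comp: assumes "S \<in> Xb n n" shows "cmpl n (cmpl n S) = S"
proof (rule set_eqI)
  fix c
  have Sb: "S \<subseteq> {0..<n} \<times> {0..<n}" using assms by (simp add: Xb_def)
  show "c \<in> cmpl n (cmpl n S) \<longleftrightarrow> c \<in> S"
    using Sb rot_rot[of c n] rot_in[of c n] unfolding cmpl_def by auto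
qed

lemma rot_swap: "rot n (j,i) = prod.swap (rot n (i,j))"
  by (simp add: rot_def)

lemma symm_comp: assumes "S \<in> Xb n n" "symm S" shows "symm (cmpl n S)"
  unfolding symm_def
proof (intro allI impI)
  fix i j assume "(i,j) \<in> cmpl n S"
  hence "i < n" "j < n" "(n-1-i, n-1-j) \<notin> S" by (auto simp: cmpl_def rot_def)
  moreover have "(n-1-j, n-1-i) \<notin> S" using assms(2) calculation(3) unfolding symm_def by blast
  ultimately show "(j,i) \<in> cmpl n S" by (auto simp: cmpl_def rot_def)
qed

lemma symm_comp_iff: assumes "S \<in> Xb n n" shows "symm (cmpl n S) \<longleftrightarrow> symm S"
  using symm_comp[OF assms] symm_comp[OF comp_Xb[OF assms]] comp_comp[OF assms] by auto

lemma card_comp: assumes "S \<in> Xb n n" shows "card (cmpl n S) = n * n - card S"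
proof -
  let ?C = "{0..<n} \<times> {0..<n}"
  have Sb: "S \<subseteq> ?C" using assms by (simp add: Xb_def)
  have e: "cmpl n S = ?C - rot n ` S"
  proof (rule set_eqI)
    fix c show "c \<in> cmpl n S \<longleftrightarrow> c \<in> ?C - rot n ` S"
    proof
      assume "c \<in> cmpl n S"
      hence c: "c \<in> ?C" "rot n c \<notin> S" by (auto simp: cmpl_def)
      have "c \<notin> rot n ` S"
      proof
        assume "c \<in> rot n ` S"
        then obtain d where "d \<in> S" "c = rot n d" by auto
        hence "rot n c = d" using rot_rot Sb by auto
        thus False using c \<open>d \<in> S\<close> by simp
      qed
      thus "c \<in> ?C - rot n ` S" using c by simp
    next
      assume "c \<in> ?C - rot n ` S"
      hence c: "c \<in> ?C" "c \<notin> rot n ` S" by auto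
      have "rot n c \<notin> S"
      proof
        assume "rot n c \<in> S"
        hence "rot n (rot n c) \<in> rot n ` S" by auto
        thus False using c rot_rot by auto
      qed
      thus "c \<in> cmpl n S" using c by (simp add: cmpl_def)
    qed
  qed
  have inj: "inj_on (rot n) ?C"
    by (metis inj_onI rot_rot)
  have sub: "rot n ` S \<subseteq> ?C" using Sb rot_in by blast
  have "card (?C - rot n ` S) = card ?C - card (rot n ` S)"
    by (rule card_Diff_subset[OF finite_subset[OF sub] sub]) simp
  also have "card (rot n ` S) = card S" by (rule card_image[OF inj_on_subset[OF inj Sb]])
  finally show ?thesis using e by (simp add: card_cartesian_product)
qed

lemma NS_sym: assumes "k \<le> n * n" shows "card (NS n k) = card (NS n (n * n - k))"
proof -
  have "bij_betw (cmpl n) (NS n k) (NS n (n * n - k))"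
  proof (rule bij_betw_byWitness[where f' = "cmpl n"])
    show "\<forall>a\<in>NS n k. cmpl n (cmpl n a) = a" by (auto simp: NS_def comp_comp)
    show "\<forall>a\<in>NS n (n * n - k). cmpl n (cmpl n a) = a" by (auto simp: NS_def comp_comp)
    show "cmpl n ` NS n k \<subseteq> NS n (n * n - k)"
      by (auto simp: NS_def comp_Xb symm_comp_iff card_comp)
    show "cmpl n ` NS n (n * n - k) \<subseteq> NS n k"
      using assms card_Xb_le by (auto simp: NS_def comp_Xb symm_comp_iff card_comp)
  qed
  thus ?thesis by (rule bij_betw_same_card)
qed



definition Cn :: "nat \<Rightarrow> (nat \<times> nat) set" where "Cn n = {0..<n} \<times> {0..<n}"

definition W :: "nat \<Rightarrow> nat \<times> nat \<Rightarrow> real" where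
  "W n c = real (n*n) - (real (snd c) - real (fst c))^2"

definition om :: "nat \<Rightarrow> (nat \<times> nat) set \<Rightarrow> real" where
  "om n S = (\<Prod>c\<in>S. W n c)"

definition Uo :: "nat \<Rightarrow> ((nat \<times> nat) set \<Rightarrow> real) \<Rightarrow> (nat \<times> nat) set \<Rightarrow> real" where
  "Uo n y M = (\<Sum>c\<in>Cn n. if c \<in> M \<and> M - {c} \<in> Xb n n then y (M - {c}) else 0)"

definition Do :: "nat \<Rightarrow> ((nat \<times> nat) set \<Rightarrow> real) \<Rightarrow> (nat \<times> nat) set \<Rightarrow> real" where
  "Do n y L = (\<Sum>c\<in>Cn n. if c \<notin> L \<and> insert c L \<in> Xb n n then W n c * y (insert c L) else 0)"

lemma finite_Cn: "finite (Cn n)" by (simp add: Cn_def)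

lemma W_pos: assumes "c \<in> Cn n" shows "W n c > 0"
proof -
  obtain i j where c: "c = (i,j)" "i < n" "j < n" using assms by (cases c) (auto simp: Cn_def)
  have a: "\<bar>real j - real i\<bar> < real n" using c by auto
  have "(real j - real i)^2 = \<bar>real j - real i\<bar>^2" by simp
  also have "\<dots> < (real n)^2" using a by (intro power_strict_mono) auto
  finally show ?thesis using c by (simp add: W_def power2_eq_square)
qed

lemma om_pos: assumes "S \<in> Xb n n" shows "om n S > 0"
  unfolding om_def
proof (rule prod_pos)
  fix c assume "c \<in> S" thus "0 < W n c" using assms by (intro W_pos) (auto simp: Xb_def Cn_def)
qed

lemma Xb_sub_Cn: "S \<in> Xb n n \<Longrightarrow> S \<subseteq> Cn n" by (simp add: Xb_def Cn_def)

lemma Xb_Int: "S \<in> Xb m n \<Longrightarrow> T \<in> Xb m n \<Longrightarrow> S \<inter> T \<in> Xb m n"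
  unfolding Xb_def dc_def by blast

lemma Xb_Un: "S \<in> Xb m n \<Longrightarrow> T \<in> Xb m n \<Longrightarrow> S \<union> T \<in> Xb m n"
  unfolding Xb_def dc_def by blast

lemma adj:
  "(\<Sum>M\<in>Xb n n. om n M * Uo n x M * z M) = (\<Sum>L\<in>Xb n n. om n L * x L * Do n z L)"
proof -
  let ?X = "Xb n n"
  have "(\<Sum>M\<in>?X. om n M * Uo n x M * z M)
      = (\<Sum>M\<in>?X. \<Sum>c\<in>Cn n. if c \<in> M \<and> M - {c} \<in> ?X then om n M * x (M - {c}) * z M else 0)"
    unfolding Uo_def by (rule sum.cong) (auto simp: sum_distrib_left sum_distrib_right intro!: sum.cong)
  also have "\<dots> = (\<Sum>c\<in>Cn n. \<Sum>M\<in>?X. if c \<in> M \<and> M - {c} \<in> ?X then om n M * x (M - {c}) * z M else 0)"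
    by (rule sum.swap)
  also have "\<dots> = (\<Sum>c\<in>Cn n. \<Sum>L\<in>?X. if c \<notin> L \<and> insert c L \<in> ?X then om n L * x L * (W n c * z (insert c L)) else 0)"
  proof (rule sum.cong[OF refl])
    fix c assume c: "c \<in> Cn n"
    have "(\<Sum>M\<in>?X. if c \<in> M \<and> M - {c} \<in> ?X then om n M * x (M - {c}) * z M else 0)
        = (\<Sum>M\<in>{M\<in>?X. c \<in> M \<and> M - {c} \<in> ?X}. om n M * x (M - {c}) * z M)"
      by (rule sum.inter_filter[OF finite_Xb, symmetric])
    also have "\<dots> = (\<Sum>L\<in>{L\<in>?X. c \<notin> L \<and> insert c L \<in> ?X}. om n L * x L * (W n c * z (insert c L)))"
    proof (rule sum.reindex_bij_witness[where i = "insert c" and j = "\<lambda>M. M - {c}"])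
      fix M assume "M \<in> {M\<in>?X. c \<in> M \<and> M - {c} \<in> ?X}"
      hence M: "M \<in> ?X" "c \<in> M" "M - {c} \<in> ?X" by auto
      show "insert c (M - {c}) = M" using M by auto
      show "M - {c} \<in> {L\<in>?X. c \<notin> L \<and> insert c L \<in> ?X}" using M by (auto simp: insert_absorb)
      have fin: "finite (M - {c})" using M(3) Xb_finite_mem by blast
      have "om n M = W n c * om n (M - {c})"
        unfolding om_def using fin M(2) by (metis insert_Diff prod.insert Diff_iff singletonI)
      thus "om n (M - {c}) * x (M - {c}) * (W n c * z (insert c (M - {c}))) = om n M * x (M - {c}) * z M"
        using M by (simp add: insert_absorb)
    next
      fix L assume "L \<in> {L\<in>?X. c \<notin> L \<and> insert c L \<in> ?X}"
      hence L: "L \<in> ?X" "c \<notin> L" "insert c L \<in> ?X" by auto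
      show "insert c L - {c} = L" using L by auto
      show "insert c L \<in> {M\<in>?X. c \<in> M \<and> M - {c} \<in> ?X}" using L by auto
    qed
    also have "\<dots> = (\<Sum>L\<in>?X. if c \<notin> L \<and> insert c L \<in> ?X then om n L * x L * (W n c * z (insert c L)) else 0)"
      by (rule sum.inter_filter[OF finite_Xb])
    finally show "(\<Sum>M\<in>?X. if c \<in> M \<and> M - {c} \<in> ?X then om n M * x (M - {c}) * z M else 0)
        = (\<Sum>L\<in>?X. if c \<notin> L \<and> insert c L \<in> ?X then om n L * x L * (W n c * z (insert c L)) else 0)" .
  qed
  also have "\<dots> = (\<Sum>L\<in>?X. \<Sum>c\<in>Cn n. if c \<notin> L \<and> insert c L \<in> ?X then om n L * x L * (W n c * z (insert c L)) else 0)"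
    by (rule sum.swap)
  also have "\<dots> = (\<Sum>L\<in>?X. om n L * x L * Do n z L)"
    unfolding Do_def by (rule sum.cong) (auto simp: sum_distrib_left intro!: sum.cong)
  finally show ?thesis .
qed

lemma FG_cond:
  assumes L: "L \<in> Xb n n" and ab: "a \<noteq> b"
  shows "(a \<notin> L \<and> insert a L \<in> Xb n n \<and> b \<in> insert a L \<and> insert a L - {b} \<in> Xb n n)
     = (b \<in> L \<and> L - {b} \<in> Xb n n \<and> a \<notin> L - {b} \<and> insert a (L - {b}) \<in> Xb n n)"
    and "insert a L - {b} = insert a (L - {b})"
proof -
  show e: "insert a L - {b} = insert a (L - {b})" using ab by auto
  show "(a \<notin> L \<and> insert a L \<in> Xb n n \<and> b \<in> insert a L \<and> insert a L - {b} \<in> Xb n n)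
     = (b \<in> L \<and> L - {b} \<in> Xb n n \<and> a \<notin> L - {b} \<and> insert a (L - {b}) \<in> Xb n n)"
  proof
    assume h: "a \<notin> L \<and> insert a L \<in> Xb n n \<and> b \<in> insert a L \<and> insert a L - {b} \<in> Xb n n"
    have eq: "L - {b} = L \<inter> (insert a L - {b})" using h by auto
    have u: "L \<inter> (insert a L - {b}) \<in> Xb n n" using Xb_Int[OF L] h by blast
    have "L - {b} \<in> Xb n n" unfolding eq by (rule u)
    thus "b \<in> L \<and> L - {b} \<in> Xb n n \<and> a \<notin> L - {b} \<and> insert a (L - {b}) \<in> Xb n n"
      using h ab e by auto
  next
    assume h: "b \<in> L \<and> L - {b} \<in> Xb n n \<and> a \<notin> L - {b} \<and> insert a (L - {b}) \<in> Xb n n"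
    have eq: "insert a L = L \<union> insert a (L - {b})" using h by auto
    have u: "L \<union> insert a (L - {b}) \<in> Xb n n" using Xb_Un[OF L] h by blast
    have "insert a L \<in> Xb n n" unfolding eq by (rule u)
    thus "a \<notin> L \<and> insert a L \<in> Xb n n \<and> b \<in> insert a L \<and> insert a L - {b} \<in> Xb n n"
      using h ab e by auto
  qed
qed

definition Phi :: "nat \<Rightarrow> (nat \<times> nat) set \<Rightarrow> real" where
  "Phi n L = (\<Sum>a\<in>Cn n. if a \<notin> L \<and> insert a L \<in> Xb n n then W n a else 0)
           - (\<Sum>a\<in>Cn n. if a \<in> L \<and> L - {a} \<in> Xb n n then W n a else 0)"

lemma comm_gen:
  assumes L: "L \<in> Xb n n"
  shows "Do n (Uo n y) L = Uo n (Do n y) L + Phi n L * y L"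
proof -
  let ?X = "Xb n n"
  define F where "F a b = (if a \<notin> L \<and> insert a L \<in> ?X \<and> b \<in> insert a L \<and> insert a L - {b} \<in> ?X
      then W n a * y (insert a L - {b}) else 0)" for a b
  define G where "G a b = (if b \<in> L \<and> L - {b} \<in> ?X \<and> a \<notin> L - {b} \<and> insert a (L - {b}) \<in> ?X
      then W n a * y (insert a (L - {b})) else 0)" for a b
  have FGe: "a \<noteq> b \<Longrightarrow> F a b = G a b" for a b
    unfolding F_def G_def using FG_cond[OF L, of a b] by simp
  have Faa: "F a a = (if a \<notin> L \<and> insert a L \<in> ?X then W n a * y L else 0)" for a
    unfolding F_def using L by auto
  have Gaa: "G a a = (if a \<in> L \<and> L - {a} \<in> ?X then W n a * y L else 0)" for a
    unfolding G_def using L by (auto simp: insert_absorb)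
  have 1: "Do n (Uo n y) L = (\<Sum>a\<in>Cn n. \<Sum>b\<in>Cn n. F a b)"
    unfolding Do_def Uo_def F_def by (rule sum.cong) (auto simp: sum_distrib_left intro!: sum.cong)
  have 2: "Uo n (Do n y) L = (\<Sum>b\<in>Cn n. \<Sum>a\<in>Cn n. G a b)"
    unfolding Do_def Uo_def G_def by (rule sum.cong) (auto intro!: sum.cong)
  have 3: "(\<Sum>b\<in>Cn n. \<Sum>a\<in>Cn n. G a b) = (\<Sum>a\<in>Cn n. \<Sum>b\<in>Cn n. G a b)"
    by (rule sum.swap)
  have 4: "(\<Sum>b\<in>Cn n. F a b) - (\<Sum>b\<in>Cn n. G a b) = F a a - G a a" if a: "a \<in> Cn n" for a
  proof -
    have "(\<Sum>b\<in>Cn n. F a b) = F a a + (\<Sum>b\<in>Cn n - {a}. F a b)" by (rule sum.remove[OF finite_Cn a])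
    moreover have "(\<Sum>b\<in>Cn n. G a b) = G a a + (\<Sum>b\<in>Cn n - {a}. G a b)" by (rule sum.remove[OF finite_Cn a])
    moreover have "(\<Sum>b\<in>Cn n - {a}. F a b) = (\<Sum>b\<in>Cn n - {a}. G a b)"
      by (rule sum.cong) (auto intro: FGe)
    ultimately show ?thesis by simp
  qed
  have "Do n (Uo n y) L - Uo n (Do n y) L = (\<Sum>a\<in>Cn n. (\<Sum>b\<in>Cn n. F a b) - (\<Sum>b\<in>Cn n. G a b))"
    using 1 2 3 by (simp add: sum_subtractf)
  also have "\<dots> = (\<Sum>a\<in>Cn n. F a a - G a a)" by (rule sum.cong) (auto intro: 4)
  also have "\<dots> = (\<Sum>a\<in>Cn n. ((if a \<notin> L \<and> insert a L \<in> ?X then W n a else 0)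
       - (if a \<in> L \<and> L - {a} \<in> ?X then W n a else 0)) * y L)"
    by (rule sum.cong) (auto simp: Faa Gaa)
  also have "\<dots> = Phi n L * y L"
    unfolding Phi_def by (simp add: sum_distrib_right sum_subtractf left_diff_distrib)
  finally show ?thesis by simp
qed



definition adP :: "(nat \<times> nat) set \<Rightarrow> nat \<times> nat \<Rightarrow> bool" where
  "adP L a \<longleftrightarrow> a \<notin> L \<and> (fst a > 0 \<longrightarrow> (fst a - 1, snd a) \<in> L) \<and> (snd a > 0 \<longrightarrow> (fst a, snd a - 1) \<in> L)"

definition rmP :: "(nat \<times> nat) set \<Rightarrow> nat \<times> nat \<Rightarrow> bool" where
  "rmP L a \<longleftrightarrow> a \<in> L \<and> (Suc (fst a), snd a) \<notin> L \<and> (fst a, Suc (snd a)) \<notin> L"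

lemma ad_iff:
  assumes L: "L \<in> Xb n n"
  shows "(a \<notin> L \<and> insert a L \<in> Xb n n) \<longleftrightarrow> (a \<in> Cn n \<and> adP L a)"
proof -
  obtain i j where a: "a = (i,j)" by (cases a)
  have dcL: "dc L" and LC: "L \<subseteq> Cn n" using L by (auto simp: Xb_def Cn_def)
  show ?thesis
  proof
    assume h: "a \<notin> L \<and> insert a L \<in> Xb n n"
    hence d: "dc (insert a L)" and "a \<in> Cn n" by (auto simp: Xb_def Cn_def)
    moreover have "i > 0 \<longrightarrow> (i - 1, j) \<in> L"
    proof
      assume "i > 0"
      hence "(i - 1, j) \<in> insert a L" using d a unfolding dc_def by (meson diff_le_self insertI1 order_refl)
      thus "(i - 1, j) \<in> L" using a \<open>i > 0\<close> by auto
    qed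
    moreover have "j > 0 \<longrightarrow> (i, j - 1) \<in> L"
    proof
      assume "j > 0"
      hence "(i, j - 1) \<in> insert a L" using d a unfolding dc_def by (meson diff_le_self insertI1 order_refl)
      thus "(i, j - 1) \<in> L" using a \<open>j > 0\<close> by auto
    qed
    ultimately show "a \<in> Cn n \<and> adP L a" using h a by (simp add: adP_def)
  next
    assume h: "a \<in> Cn n \<and> adP L a"
    hence h1: "i > 0 \<longrightarrow> (i - 1, j) \<in> L" "j > 0 \<longrightarrow> (i, j - 1) \<in> L" "a \<notin> L"
      using a by (auto simp: adP_def)
    have "dc (insert a L)" unfolding dc_def
    proof (intro allI impI)
      fix p q p' q' assume pq: "(p,q) \<in> insert a L" "p' \<le> p" "q' \<le> q"
      show "(p',q') \<in> insert a L"
      proof (cases "(p,q) \<in> L")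
        case True thus ?thesis using dcL pq unfolding dc_def by blast
      next
        case False
        hence pq': "p = i" "q = j" using pq a by auto
        show ?thesis
        proof (cases "p' = i \<and> q' = j")
          case True thus ?thesis using a by simp
        next
          case False
          show ?thesis
          proof (cases "p' < i")
            case True
            hence "(i-1,j) \<in> L" using h1 by simp
            moreover have "p' \<le> i - 1" "q' \<le> j" using True pq pq' by auto
            ultimately show ?thesis using dcL unfolding dc_def by blast
          next
            case False
            hence "q' < j" using \<open>\<not> (p' = i \<and> q' = j)\<close> pq pq' by auto
            hence "(i,j-1) \<in> L" using h1 by simp
            moreover have "p' \<le> i" "q' \<le> j - 1" using \<open>q' < j\<close> pq pq' by auto
            ultimately show ?thesis using dcL unfolding dc_def by blast
          qed
        qed
      qed
    qed
    moreover have "insert a L \<subseteq> {0..<n} \<times> {0..<n}" using h LC by (auto simp: Cn_def)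
    ultimately show "a \<notin> L \<and> insert a L \<in> Xb n n" using h1 by (simp add: Xb_def)
  qed
qed

lemma rm_iff:
  assumes L: "L \<in> Xb n n"
  shows "(a \<in> L \<and> L - {a} \<in> Xb n n) \<longleftrightarrow> rmP L a"
proof -
  obtain i j where a: "a = (i,j)" by (cases a)
  have dcL: "dc L" and LC: "L \<subseteq> {0..<n} \<times> {0..<n}" using L by (auto simp: Xb_def)
  show ?thesis
  proof
    assume h: "a \<in> L \<and> L - {a} \<in> Xb n n"
    hence d: "dc (L - {a})" by (simp add: Xb_def)
    have "(Suc i, j) \<notin> L"
    proof
      assume "(Suc i, j) \<in> L"
      hence "(Suc i, j) \<in> L - {a}" using a by auto
      hence "(i, j) \<in> L - {a}" using d unfolding dc_def by (meson le_Suc_eq order_refl)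
      thus False using a by simp
    qed
    moreover have "(i, Suc j) \<notin> L"
    proof
      assume "(i, Suc j) \<in> L"
      hence "(i, Suc j) \<in> L - {a}" using a by auto
      hence "(i, j) \<in> L - {a}" using d unfolding dc_def by (meson le_Suc_eq order_refl)
      thus False using a by simp
    qed
    ultimately show "rmP L a" using h a by (simp add: rmP_def)
  next
    assume h: "rmP L a"
    hence h1: "a \<in> L" "(Suc i, j) \<notin> L" "(i, Suc j) \<notin> L" using a by (auto simp: rmP_def)
    have "dc (L - {a})" unfolding dc_def
    proof (intro allI impI)
      fix p q p' q' assume pq: "(p,q) \<in> L - {a}" "p' \<le> p" "q' \<le> q"
      have "(p',q') \<in> L" using dcL pq unfolding dc_def by blast
      moreover have "(p',q') \<noteq> a"
      proof
        assume "(p',q') = a"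
        hence "i \<le> p" "j \<le> q" "(p,q) \<noteq> (i,j)" using pq a by auto
        hence "Suc i \<le> p \<or> Suc j \<le> q" by auto
        thus False
        proof
          assume "Suc i \<le> p"
          hence "(Suc i, j) \<in> L" using dcL pq \<open>j \<le> q\<close> unfolding dc_def by blast
          thus False using h1 by simp
        next
          assume "Suc j \<le> q"
          hence "(i, Suc j) \<in> L" using dcL pq \<open>i \<le> p\<close> unfolding dc_def by blast
          thus False using h1 by simp
        qed
      qed
      ultimately show "(p',q') \<in> L - {a}" by simp
    qed
    thus "a \<in> L \<and> L - {a} \<in> Xb n n" using h1 LC by (auto simp: Xb_def)
  qed
qed

definition Phi' :: "nat \<Rightarrow> (nat \<times> nat) set \<Rightarrow> real" where
  "Phi' n L = (\<Sum>a\<in>Cn n. if adP L a then W n a else 0) - (\<Sum>a\<in>Cn n. if rmP L a then W n a else 0)"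

lemma Phi_eq: "L \<in> Xb n n \<Longrightarrow> Phi n L = Phi' n L"
  unfolding Phi_def Phi'_def using ad_iff rm_iff by (intro arg_cong2[where f = minus] sum.cong) auto

lemma sum_delta_conj:
  "finite A \<Longrightarrow> (\<Sum>c\<in>A. if c = p \<and> Q then f c else (0::real)) = (if p \<in> A \<and> Q then f p else 0)"
  by (cases Q) simp_all

lemma Phi'_empty: "Phi' n {} = real (n * n)"
proof -
  have "adP {} a \<longleftrightarrow> a = (0,0)" for a by (cases a) (auto simp: adP_def)
  moreover have "\<not> rmP {} a" for a by (simp add: rmP_def)
  ultimately have "Phi' n {} = (\<Sum>a\<in>Cn n. if a = (0,0) \<and> True then W n a else 0)"
    by (simp add: Phi'_def)
  also have "\<dots> = (if (0,0) \<in> Cn n then W n (0,0) else 0)" by (simp add: finite_Cn)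
  also have "\<dots> = real (n * n)" by (cases n) (auto simp: Cn_def W_def)
  finally show ?thesis .
qed



lemma pt:
  assumes h: "(i,j) \<notin> L" "0 < i \<longrightarrow> (i-1,j) \<in> L" "0 < j \<longrightarrow> (i,j-1) \<in> L"
     "(Suc i,j) \<notin> L" "(i,Suc j) \<notin> L"
  shows "((if adP (insert (i,j) L) c then w else 0) - (if rmP (insert (i,j) L) c then w else 0))
       - ((if adP L c then w else 0) - (if rmP L c then w else 0))
   = (if c = (i,j) \<and> True then -2*w else (0::real))
   + (if c = (Suc i,j) \<and> (j = 0 \<or> (Suc i, j-1) \<in> L) then w else 0)
   + (if c = (i,Suc j) \<and> (i = 0 \<or> (i-1, Suc j) \<in> L) then w else 0)
   + (if c = (i-1,j) \<and> (0 < i \<and> (i-1, Suc j) \<notin> L) then w else 0)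
   + (if c = (i,j-1) \<and> (0 < j \<and> (Suc i, j-1) \<notin> L) then w else 0)"
proof -
  obtain p q where c: "c = (p,q)" by (cases c)
  consider "c = (i,j)" | "c = (Suc i, j)" | "c = (i, Suc j)" | "0 < i \<and> c = (i-1,j)"
    | "0 < j \<and> c = (i, j-1)"
    | "c \<noteq> (i,j) \<and> c \<noteq> (Suc i, j) \<and> c \<noteq> (i, Suc j) \<and> \<not> (0 < i \<and> c = (i-1,j)) \<and> \<not> (0 < j \<and> c = (i, j-1))"
    by blast
  thus ?thesis
  proof cases
    case 1 thus ?thesis using h by (auto simp: adP_def rmP_def)
  next
    case 2 thus ?thesis using h by (auto simp: adP_def rmP_def)
  next
    case 3 thus ?thesis using h by (auto simp: adP_def rmP_def)
  next
    case 4 thus ?thesis using h by (auto simp: adP_def rmP_def)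
  next
    case 5 thus ?thesis using h by (auto simp: adP_def rmP_def)
  next
    case 6
    have "adP (insert (i,j) L) c = adP L c"
      using 6 c unfolding adP_def by (cases p; cases q) auto
    moreover have "rmP (insert (i,j) L) c = rmP L c"
      using 6 c unfolding rmP_def by auto
    moreover have z4: "\<not> (c = (i-1,j) \<and> (0 < i \<and> (i-1, Suc j) \<notin> L))" using 6 by blast
    moreover have z5: "\<not> (c = (i,j-1) \<and> (0 < j \<and> (Suc i, j-1) \<notin> L))" using 6 by blast
    moreover have z1: "\<not> (c = (i,j) \<and> True)" using 6 by blast
    moreover have z2: "\<not> (c = (Suc i,j) \<and> (j = 0 \<or> (Suc i, j-1) \<in> L))" using 6 by blast
    moreover have z3: "\<not> (c = (i,Suc j) \<and> (i = 0 \<or> (i-1, Suc j) \<in> L))" using 6 by blast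
    ultimately show ?thesis by (simp only: if_not_P) simp
  qed
qed

lemma step:
  assumes L: "L \<in> Xb n n" and aC: "(i,j) \<in> Cn n" and ad: "adP L (i,j)"
  shows "Phi' n (insert (i,j) L) = Phi' n L - 2"
proof -
  have dcL: "dc L" and LC: "L \<subseteq> Cn n" using L by (auto simp: Xb_def Cn_def)
  have h: "(i,j) \<notin> L" "0 < i \<longrightarrow> (i-1,j) \<in> L" "0 < j \<longrightarrow> (i,j-1) \<in> L"
    using ad by (auto simp: adP_def)
  have h4: "(Suc i,j) \<notin> L"
  proof
    assume "(Suc i,j) \<in> L" hence "(i,j) \<in> L" using dcL unfolding dc_def by (meson le_Suc_eq order_refl)
    thus False using h by simp
  qed
  have h5: "(i,Suc j) \<notin> L"
  proof
    assume "(i,Suc j) \<in> L" hence "(i,j) \<in> L" using dcL unfolding dc_def by (meson le_Suc_eq order_refl)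
    thus False using h by simp
  qed
  have ij: "i < n" "j < n" using aC by (auto simp: Cn_def)
  let ?M = "insert (i,j) L"
  define T1 where "T1 = (\<Sum>c\<in>Cn n. if c = (i,j) \<and> True then -2 * W n c else (0::real))"
  define T2 where "T2 = (\<Sum>c\<in>Cn n. if c = (Suc i,j) \<and> (j = 0 \<or> (Suc i, j-1) \<in> L) then W n c else 0)"
  define T3 where "T3 = (\<Sum>c\<in>Cn n. if c = (i,Suc j) \<and> (i = 0 \<or> (i-1, Suc j) \<in> L) then W n c else 0)"
  define T4 where "T4 = (\<Sum>c\<in>Cn n. if c = (i-1,j) \<and> (0 < i \<and> (i-1, Suc j) \<notin> L) then W n c else 0)"
  define T5 where "T5 = (\<Sum>c\<in>Cn n. if c = (i,j-1) \<and> (0 < j \<and> (Suc i, j-1) \<notin> L) then W n c else 0)"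
  have "Phi' n ?M - Phi' n L = (\<Sum>c\<in>Cn n. ((if adP ?M c then W n c else 0) - (if rmP ?M c then W n c else 0))
       - ((if adP L c then W n c else 0) - (if rmP L c then W n c else 0)))"
    by (simp add: Phi'_def sum_subtractf)
  also have "\<dots> = (\<Sum>c\<in>Cn n. (if c = (i,j) \<and> True then -2 * W n c else (0::real))
   + (if c = (Suc i,j) \<and> (j = 0 \<or> (Suc i, j-1) \<in> L) then W n c else 0)
   + (if c = (i,Suc j) \<and> (i = 0 \<or> (i-1, Suc j) \<in> L) then W n c else 0)
   + (if c = (i-1,j) \<and> (0 < i \<and> (i-1, Suc j) \<notin> L) then W n c else 0)
   + (if c = (i,j-1) \<and> (0 < j \<and> (Suc i, j-1) \<notin> L) then W n c else 0))"
    by (rule sum.cong[OF refl], rule pt[OF h h4 h5])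
  also have "\<dots> = T1 + T2 + T3 + T4 + T5"
    unfolding T1_def T2_def T3_def T4_def T5_def by (simp only: sum.distrib)
  finally have e: "Phi' n ?M - Phi' n L = T1 + T2 + T3 + T4 + T5" .
  have t1: "T1 = -2 * W n (i,j)" unfolding T1_def by (subst sum_delta_conj[OF finite_Cn]) (simp add: aC)
  have t2: "T2 = (if (Suc i,j) \<in> Cn n \<and> (j = 0 \<or> (Suc i, j-1) \<in> L) then W n (Suc i,j) else 0)"
    unfolding T2_def by (rule sum_delta_conj[OF finite_Cn])
  have t3: "T3 = (if (i,Suc j) \<in> Cn n \<and> (i = 0 \<or> (i-1, Suc j) \<in> L) then W n (i,Suc j) else 0)"
    unfolding T3_def by (rule sum_delta_conj[OF finite_Cn])
  have t4: "T4 = (if (i-1,j) \<in> Cn n \<and> (0 < i \<and> (i-1, Suc j) \<notin> L) then W n (i-1,j) else 0)"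
    unfolding T4_def by (rule sum_delta_conj[OF finite_Cn])
  have t5: "T5 = (if (i,j-1) \<in> Cn n \<and> (0 < j \<and> (Suc i, j-1) \<notin> L) then W n (i,j-1) else 0)"
    unfolding T5_def by (rule sum_delta_conj[OF finite_Cn])
  let ?N = "real (n*n)" and ?t = "real j - real i"
  have s1: "T3 + T4 = ?N - (?t + 1)^2"
  proof (cases "i = 0")
    case True
    show ?thesis
    proof (cases "Suc j < n")
      case True thus ?thesis using \<open>i = 0\<close> ij by (simp add: t3 t4 Cn_def W_def)
    next
      case False
      hence "Suc j = n" using ij by simp
      hence "real n = real j + 1" by simp
      thus ?thesis using \<open>i = 0\<close> False by (simp add: t3 t4 Cn_def W_def power2_eq_square)
    qed
  next
    case False
    show ?thesis
    proof (cases "(i-1, Suc j) \<in> L")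
      case True
      hence "Suc j < n" using LC by (auto simp: Cn_def)
      thus ?thesis using False True ij by (simp add: t3 t4 Cn_def W_def algebra_simps)
    next
      case nL: False
      have "real (i - 1) = real i - 1" using False by (simp add: of_nat_diff)
      moreover have "i - 1 < n" using ij by simp
      ultimately show ?thesis using False nL ij by (simp add: t3 t4 Cn_def W_def algebra_simps)
    qed
  qed
  have s2: "T2 + T5 = ?N - (?t - 1)^2"
  proof (cases "j = 0")
    case True
    show ?thesis
    proof (cases "Suc i < n")
      case True thus ?thesis using \<open>j = 0\<close> ij by (simp add: t2 t5 Cn_def W_def power2_eq_square algebra_simps)
    next
      case False
      hence "Suc i = n" using ij by simp
      hence "real n = real i + 1" by simp
      thus ?thesis using \<open>j = 0\<close> False by (simp add: t2 t5 Cn_def W_def power2_eq_square algebra_simps)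
    qed
  next
    case False
    show ?thesis
    proof (cases "(Suc i, j-1) \<in> L")
      case True
      hence "Suc i < n" using LC by (auto simp: Cn_def)
      have "real (j - 1) = real j - 1" using False by (simp add: of_nat_diff)
      thus ?thesis using False True ij \<open>Suc i < n\<close> by (simp add: t2 t5 Cn_def W_def algebra_simps)
    next
      case nL: False
      have "real (j - 1) = real j - 1" using False by (simp add: of_nat_diff)
      moreover have "j - 1 < n" using ij by simp
      ultimately show ?thesis using False nL ij by (simp add: t2 t5 Cn_def W_def algebra_simps)
    qed
  qed
  have "T1 + T2 + T3 + T4 + T5 = -2 * W n (i,j) + (?N - (?t + 1)^2) + (?N - (?t - 1)^2)"
    using t1 s1 s2 by simp
  also have "\<dots> = -2" by (simp add: W_def power2_eq_square algebra_simps)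
  finally show ?thesis using e by simp
qed

lemma diag':
  "L \<in> Xb n n \<Longrightarrow> Phi' n L = real (n*n) - 2 * real (card L)"
proof (induction "card L" arbitrary: L)
  case 0
  hence "L = {}" using Xb_finite_mem by auto
  thus ?case by (simp add: Phi'_empty)
next
  case (Suc m)
  have fin: "finite L" using Suc.prems Xb_finite_mem by blast
  hence ne: "L \<noteq> {}" using Suc.hyps by auto
  define f where "f c = fst c + snd c" for c :: "nat \<times> nat"
  have "Max (f ` L) \<in> f ` L" using fin ne by simp
  then obtain a where aL: "a \<in> L" and amax: "f a = Max (f ` L)" by auto
  have ge: "\<forall>b\<in>L. f b \<le> f a" using fin amax by simp
  obtain i j where a: "a = (i,j)" by (cases a)
  have "rmP L a"
    using ge aL unfolding rmP_def f_def a by force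
  hence L': "L - {a} \<in> Xb n n" using rm_iff[OF Suc.prems] by blast
  have ins: "insert a (L - {a}) = L" using aL by auto
  have "a \<notin> L - {a} \<and> insert a (L - {a}) \<in> Xb n n" using ins Suc.prems by simp
  hence adC: "a \<in> Cn n \<and> adP (L - {a}) a" using ad_iff[OF L'] by blast
  have cm: "m = card (L - {a})" using Suc.hyps(2) aL fin by (simp add: card_Diff_singleton)
  have "Phi' n L = Phi' n (L - {a}) - 2"
    using step[OF L', of i j] adC a ins by simp
  also have "\<dots> = real (n*n) - 2 * real m - 2" using Suc.hyps(1)[OF cm L'] cm by simp
  finally show ?case using Suc.hyps(2) by simp
qed

lemma comm:
  assumes L: "L \<in> Xb n n"
  shows "Do n (Uo n y) L = Uo n (Do n y) L + (real (n*n) - 2 * real (card L)) * y L"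
  using comm_gen[OF L] Phi_eq[OF L] diag'[OF L] by simp



lemma dimcount:
  fixes M :: "'b \<Rightarrow> 'a \<Rightarrow> real"
  assumes "finite B" "finite A"
    and "\<forall>x. (\<forall>b\<in>B. (\<Sum>a\<in>A. M b a * x a) = 0) \<longrightarrow> (\<forall>a\<in>A. x a = 0)"
  shows "card A \<le> card B"
  using assms
proof (induction B arbitrary: A M rule: finite_induct)
  case empty
  have h: "\<forall>a\<in>A. (1::real) = 0" using empty.prems(2)[rule_format, of "\<lambda>_. 1"] by blast
  hence "A = {}" by auto
  thus ?case by simp
next
  case (insert b B)
  show ?case
  proof (cases "\<forall>a\<in>A. M b a = 0")
    case True
    have "\<forall>x. (\<forall>b'\<in>B. (\<Sum>a\<in>A. M b' a * x a) = 0) \<longrightarrow> (\<forall>a\<in>A. x a = 0)"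
    proof (intro allI impI)
      fix x assume h: "\<forall>b'\<in>B. (\<Sum>a\<in>A. M b' a * x a) = 0"
      have "(\<Sum>a\<in>A. M b a * x a) = 0" using True by simp
      thus "\<forall>a\<in>A. x a = 0" using h insert.prems(2) by auto
    qed
    hence "card A \<le> card B" using insert.IH[OF insert.prems(1)] by blast
    thus ?thesis using insert.hyps by simp
  next
    case False
    then obtain a0 where a0: "a0 \<in> A" "M b a0 \<noteq> 0" by auto
    let ?A' = "A - {a0}"
    define M' where "M' b' a = M b' a - M b' a0 * M b a / M b a0" for b' a
    have "\<forall>x. (\<forall>b'\<in>B. (\<Sum>a\<in>?A'. M' b' a * x a) = 0) \<longrightarrow> (\<forall>a\<in>?A'. x a = 0)"
    proof (intro allI impI)
      fix x' assume h: "\<forall>b'\<in>B. (\<Sum>a\<in>?A'. M' b' a * x' a) = 0"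
      define s where "s = (\<Sum>a\<in>?A'. M b a * x' a)"
      define x where "x a = (if a = a0 then - s / M b a0 else x' a)" for a
      have split: "(\<Sum>a\<in>A. M c a * x a) = M c a0 * x a0 + (\<Sum>a\<in>?A'. M c a * x' a)" for c
      proof -
        have "(\<Sum>a\<in>A. M c a * x a) = M c a0 * x a0 + (\<Sum>a\<in>?A'. M c a * x a)"
          by (rule sum.remove[OF insert.prems(1) a0(1)])
        also have "(\<Sum>a\<in>?A'. M c a * x a) = (\<Sum>a\<in>?A'. M c a * x' a)"
          by (rule sum.cong) (auto simp: x_def)
        finally show ?thesis .
      qed
      have "\<forall>c\<in>insert b B. (\<Sum>a\<in>A. M c a * x a) = 0"
      proof
        fix c assume c: "c \<in> insert b B"
        show "(\<Sum>a\<in>A. M c a * x a) = 0"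
        proof (cases "c = b")
          case True
          show ?thesis unfolding True split using a0(2) by (simp add: x_def s_def)
        next
          case False
          hence cB: "c \<in> B" using c by simp
          have "(\<Sum>a\<in>?A'. M' c a * x' a) = (\<Sum>a\<in>?A'. M c a * x' a) - M c a0 / M b a0 * s"
            unfolding M'_def s_def by (simp add: algebra_simps sum_subtractf sum_distrib_left)
          hence "(\<Sum>a\<in>?A'. M c a * x' a) = M c a0 / M b a0 * s" using h cB by simp
          thus ?thesis unfolding split by (simp add: x_def)
        qed
      qed
      hence x0: "\<forall>a\<in>A. x a = 0" using insert.prems(2) by blast
      show "\<forall>a\<in>?A'. x' a = 0"
      proof
        fix a assume "a \<in> ?A'"
        hence a: "a \<in> A" "a \<noteq> a0" by auto
        hence "x a = 0" using x0 by blast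
        thus "x' a = 0" using a(2) by (simp add: x_def)
      qed
    qed
    hence "card ?A' \<le> card B" using insert.IH[of ?A' M'] insert.prems(1) by blast
    moreover have "card A = Suc (card ?A')" using insert.prems(1) a0(1)
      using card_gt_0_iff by (metis card_Suc_Diff1)
    ultimately show ?thesis using insert.hyps by simp
  qed
qed



lemma inj_U:
  assumes k: "2*k < n*n" and supp: "\<forall>S\<in>Xb n n. card S \<noteq> k \<longrightarrow> y S = 0"
    and zero: "\<forall>M\<in>Xb n n. Uo n y M = 0"
  shows "\<forall>S\<in>Xb n n. y S = 0"
proof -
  let ?X = "Xb n n"
  have DU0: "Do n (Uo n y) L = 0" for L
    unfolding Do_def using zero by (intro sum.neutral) auto
  have eq: "Uo n (Do n y) L + (real (n*n) - 2 * real (card L)) * y L = 0" if "L \<in> ?X" for L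
    using comm[OF that, of y] DU0[of L] by simp
  have eq2: "(real (n*n) - 2 * real (card L)) * y L = (real (n*n) - 2 * real k) * y L" if "L \<in> ?X" for L
    using supp that by (cases "card L = k") auto
  have "0 = (\<Sum>L\<in>?X. om n L * y L * (Uo n (Do n y) L + (real (n*n) - 2 * real (card L)) * y L))"
  proof (rule sym, rule sum.neutral, rule ballI)
    fix L assume "L \<in> ?X"
    from eq[OF this] show "om n L * y L * (Uo n (Do n y) L + (real (n*n) - 2 * real (card L)) * y L) = 0"
      by (simp only: mult_zero_right)
  qed
  also have "\<dots> = (\<Sum>L\<in>?X. om n L * Uo n (Do n y) L * y L) + (real (n*n) - 2 * real k) * (\<Sum>L\<in>?X. om n L * y L * y L)"
  proof -
    have pt: "om n L * y L * (Uo n (Do n y) L + (real (n*n) - 2 * real (card L)) * y L)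
       = om n L * Uo n (Do n y) L * y L + (real (n*n) - 2 * real k) * (om n L * y L * y L)" if "L \<in> ?X" for L
    proof -
      have "om n L * y L * (Uo n (Do n y) L + (real (n*n) - 2 * real (card L)) * y L)
         = om n L * Uo n (Do n y) L * y L + om n L * y L * ((real (n*n) - 2 * real (card L)) * y L)"
        by (simp add: algebra_simps)
      also have "\<dots> = om n L * Uo n (Do n y) L * y L + om n L * y L * ((real (n*n) - 2 * real k) * y L)"
        using eq2[OF that] by simp
      also have "\<dots> = om n L * Uo n (Do n y) L * y L + (real (n*n) - 2 * real k) * (om n L * y L * y L)"
        by (simp add: algebra_simps)
      finally show ?thesis .
    qed
    have "(\<Sum>L\<in>?X. om n L * y L * (Uo n (Do n y) L + (real (n*n) - 2 * real (card L)) * y L))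
        = (\<Sum>L\<in>?X. om n L * Uo n (Do n y) L * y L + (real (n*n) - 2 * real k) * (om n L * y L * y L))"
      by (rule sum.cong[OF refl]) (rule pt)
    thus ?thesis by (simp add: sum.distrib sum_distrib_left)
  qed
  also have "(\<Sum>L\<in>?X. om n L * Uo n (Do n y) L * y L) = (\<Sum>L\<in>?X. om n L * Do n y L * Do n y L)"
    by (rule adj)
  finally have e: "0 = (\<Sum>L\<in>?X. om n L * Do n y L * Do n y L) + (real (n*n) - 2 * real k) * (\<Sum>L\<in>?X. om n L * y L * y L)" .
  have nn: "0 \<le> om n L * b * b" if "L \<in> ?X" for L b
  proof -
    have "0 \<le> om n L" using om_pos[OF that] by simp
    hence "0 \<le> om n L * (b * b)" by (rule mult_nonneg_nonneg) simp
    thus ?thesis by (simp add: mult.assoc)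
  qed
  have nn1: "(\<Sum>L\<in>?X. om n L * Do n y L * Do n y L) \<ge> 0"
    by (rule sum_nonneg, rule nn)
  have nn2: "\<forall>L\<in>?X. om n L * y L * y L \<ge> 0" using nn by blast
  have pos: "real (n*n) - 2 * real k > 0" using k by linarith
  have B0: "(\<Sum>L\<in>?X. om n L * y L * y L) \<ge> 0" using nn2 by (intro sum_nonneg) auto
  have "(real (n*n) - 2 * real k) * (\<Sum>L\<in>?X. om n L * y L * y L) \<ge> 0"
    using pos B0 by simp
  hence "(real (n*n) - 2 * real k) * (\<Sum>L\<in>?X. om n L * y L * y L) = 0" using e nn1 by linarith
  hence "(\<Sum>L\<in>?X. om n L * y L * y L) = 0" using pos by simp
  moreover have "((\<Sum>L\<in>?X. om n L * y L * y L) = 0) = (\<forall>L\<in>?X. om n L * y L * y L = 0)"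
    by (rule sum_nonneg_eq_0_iff[OF finite_Xb]) (rule nn)
  ultimately have z: "\<forall>L\<in>?X. om n L * y L * y L = 0" by simp
  show ?thesis
  proof
    fix L assume L: "L \<in> ?X"
    have "om n L \<noteq> 0" using om_pos[OF L] by simp
    thus "y L = 0" using z L by auto
  qed
qed



definition sw :: "(nat \<times> nat) set \<Rightarrow> (nat \<times> nat) set" where
  "sw S = prod.swap ` S"

lemma sw_sw[simp]: "sw (sw S) = S"
  by (simp add: sw_def image_image)

lemma mem_sw: "c \<in> sw S \<longleftrightarrow> prod.swap c \<in> S"
proof
  assume "c \<in> sw S"
  then obtain d where "d \<in> S" "c = prod.swap d" by (auto simp: sw_def)
  thus "prod.swap c \<in> S" by simp
next
  assume "prod.swap c \<in> S"
  hence "prod.swap (prod.swap c) \<in> prod.swap ` S" by (rule imageI)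
  thus "c \<in> sw S" by (simp add: sw_def)
qed

lemma sw_Xb: assumes "S \<in> Xb n n" shows "sw S \<in> Xb n n"
proof -
  have "sw S \<subseteq> {0..<n} \<times> {0..<n}" using assms by (auto simp: Xb_def sw_def)
  moreover have "dc (sw S)" using assms unfolding Xb_def dc_def by (auto simp: mem_sw)
  ultimately show ?thesis by (simp add: Xb_def)
qed

lemma sw_Xb_iff: "sw S \<in> Xb n n \<longleftrightarrow> S \<in> Xb n n"
  using sw_Xb[of S n] sw_Xb[of "sw S" n] by auto

lemma card_sw: "card (sw S) = card S"
  unfolding sw_def by (rule card_image) (auto simp: inj_on_def)

lemma symm_sw: "symm S \<longleftrightarrow> sw S = S"
proof
  assume "symm S" thus "sw S = S" unfolding symm_def by (auto simp: mem_sw set_eq_iff)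
next
  assume "sw S = S" thus "symm S" unfolding symm_def by (metis mem_sw swap_simp)
qed

lemma sw_diff: "sw M - {prod.swap c} = sw (M - {c})"
proof (rule set_eqI)
  fix d
  have "d \<noteq> prod.swap c \<longleftrightarrow> prod.swap d \<noteq> c" by (metis swap_swap)
  thus "d \<in> sw M - {prod.swap c} \<longleftrightarrow> d \<in> sw (M - {c})" by (simp add: mem_sw)
qed

lemma swap_Cn: "c \<in> Cn n \<Longrightarrow> prod.swap c \<in> Cn n"
  by (cases c) (auto simp: Cn_def)

lemma Uo_sw: "Uo n z (sw M) = Uo n (\<lambda>S. z (sw S)) M"
  unfolding Uo_def
proof (rule sum.reindex_bij_witness[where i = prod.swap and j = prod.swap])
  fix c assume "c \<in> Cn n"
  thus "prod.swap (prod.swap c) = c" "prod.swap c \<in> Cn n" by (auto simp: swap_Cn)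
  have e: "sw M - {c} = sw (M - {prod.swap c})" using sw_diff[of M "prod.swap c"] by simp
  show "(if prod.swap c \<in> M \<and> M - {prod.swap c} \<in> Xb n n then z (sw (M - {prod.swap c})) else 0)
      = (if c \<in> sw M \<and> sw M - {c} \<in> Xb n n then z (sw M - {c}) else 0)"
    unfolding e by (simp add: mem_sw sw_Xb_iff)
next
  fix c assume "c \<in> Cn n"
  thus "prod.swap (prod.swap c) = c" "prod.swap c \<in> Cn n" by (auto simp: swap_Cn)
qed

definition orb :: "(nat \<times> nat) set \<Rightarrow> (nat \<times> nat) set set" where
  "orb S = {S, sw S}"

definition Ob :: "nat \<Rightarrow> nat \<Rightarrow> (nat \<times> nat) set set set" where
  "Ob n k = orb ` NS n k"

definition rep :: "(nat \<times> nat) set set \<Rightarrow> (nat \<times> nat) set" where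
  "rep o' = (SOME S. S \<in> o')"

lemma orb_sw: "orb (sw S) = orb S" by (auto simp: orb_def)

lemma NS_sw: "S \<in> NS n k \<Longrightarrow> sw S \<in> NS n k"
  by (auto simp: NS_def sw_Xb card_sw symm_sw)

lemma NS_ne: "S \<in> NS n k \<Longrightarrow> sw S \<noteq> S"
  by (auto simp: NS_def symm_sw)

lemma rep_props: assumes "o' \<in> Ob n k" shows "rep o' \<in> NS n k" "o' = orb (rep o')"
proof -
  obtain S where S: "S \<in> NS n k" "o' = orb S" using assms by (auto simp: Ob_def)
  have "rep o' \<in> o'" unfolding rep_def using S by (metis insertI1 orb_def someI)
  hence "rep o' = S \<or> rep o' = sw S" using S by (auto simp: orb_def)
  thus "rep o' \<in> NS n k" "o' = orb (rep o')" using S NS_sw orb_sw by auto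
qed

lemma finite_Ob: "finite (Ob n k)" unfolding Ob_def using finite_NS by simp

lemma card_NS_Ob: "card (NS n k) = 2 * card (Ob n k)"
proof -
  have U: "\<Union>(Ob n k) = NS n k"
    by (auto simp: Ob_def orb_def NS_sw)
  have "2 * card (Ob n k) = card (\<Union>(Ob n k))"
  proof (rule card_partition)
    show "finite (Ob n k)" by (rule finite_Ob)
    show "finite (\<Union>(Ob n k))" using U finite_NS by simp
    show "\<And>c. c \<in> Ob n k \<Longrightarrow> card c = 2"
    proof -
      fix c assume "c \<in> Ob n k"
      then obtain S where "S \<in> NS n k" "c = orb S" by (auto simp: Ob_def)
      moreover have "sw S \<noteq> S" using NS_ne calculation(1) by blast
      ultimately show "card c = 2" by (simp add: orb_def)
    qed
    show "\<And>c1 c2. c1 \<in> Ob n k \<Longrightarrow> c2 \<in> Ob n k \<Longrightarrow> c1 \<noteq> c2 \<Longrightarrow> c1 \<inter> c2 = {}"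
    proof -
      fix c1 c2 assume c: "c1 \<in> Ob n k" "c2 \<in> Ob n k" "c1 \<noteq> c2"
      show "c1 \<inter> c2 = {}"
      proof (rule ccontr)
        assume "c1 \<inter> c2 \<noteq> {}"
        then obtain R where R: "R \<in> c1" "R \<in> c2" by auto
        obtain S T where ST: "c1 = orb S" "c2 = orb T" using c by (auto simp: Ob_def)
        have "orb R = orb S" using R(1) ST(1) orb_sw by (auto simp: orb_def)
        moreover have "orb R = orb T" using R(2) ST(2) orb_sw by (auto simp: orb_def)
        ultimately show False using c(3) ST by simp
      qed
    qed
  qed
  thus ?thesis using U by simp
qed

definition ev :: "(nat \<times> nat) set set \<Rightarrow> (nat \<times> nat) set \<Rightarrow> real" where
  "ev o' S = (if S = rep o' then 1 else if S = sw (rep o') then -1 else 0)"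

lemma ev_sw: assumes "sw (rep o') \<noteq> rep o'" shows "ev o' (sw S) = - ev o' S"
proof -
  have "sw S = rep o' \<longleftrightarrow> S = sw (rep o')" by (metis sw_sw)
  moreover have "sw S = sw (rep o') \<longleftrightarrow> S = rep o'" by (metis sw_sw)
  ultimately show ?thesis using assms unfolding ev_def by auto
qed

lemma Uo_lin: "Uo n (\<lambda>S. \<Sum>o'\<in>A. x o' * f o' S) M = (\<Sum>o'\<in>A. Uo n (f o') M * x o')"
proof -
  have "Uo n (\<lambda>S. \<Sum>o'\<in>A. x o' * f o' S) M
      = (\<Sum>c\<in>Cn n. \<Sum>o'\<in>A. if c \<in> M \<and> M - {c} \<in> Xb n n then x o' * f o' (M - {c}) else 0)"
    unfolding Uo_def by (rule sum.cong) auto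
  also have "\<dots> = (\<Sum>o'\<in>A. \<Sum>c\<in>Cn n. if c \<in> M \<and> M - {c} \<in> Xb n n then x o' * f o' (M - {c}) else 0)"
    by (rule sum.swap)
  also have "\<dots> = (\<Sum>o'\<in>A. Uo n (f o') M * x o')"
    unfolding Uo_def by (rule sum.cong) (auto simp: sum_distrib_right intro!: sum.cong)
  finally show ?thesis .
qed

lemma unimod: assumes k: "2*k < n*n" shows "card (NS n k) \<le> card (NS n (Suc k))"
proof -
  let ?A = "Ob n k" and ?B = "Ob n (Suc k)" and ?X = "Xb n n"
  have "card ?A \<le> card ?B"
  proof (rule dimcount[where M = "\<lambda>o2 o1. Uo n (ev o1) (rep o2)"])
    show "finite ?B" "finite ?A" by (rule finite_Ob)+
    show "\<forall>x. (\<forall>b\<in>?B. (\<Sum>a\<in>?A. Uo n (ev a) (rep b) * x a) = 0) \<longrightarrow> (\<forall>a\<in>?A. x a = 0)"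
    proof (intro allI impI)
      fix x assume H: "\<forall>b\<in>?B. (\<Sum>a\<in>?A. Uo n (ev a) (rep b) * x a) = 0"
      define y where "y S = (\<Sum>a\<in>?A. x a * ev a S)" for S
      have lin: "Uo n y M = (\<Sum>a\<in>?A. Uo n (ev a) M * x a)" for M
        unfolding y_def by (rule Uo_lin)
      have anti: "y (sw S) = - y S" for S
      proof -
        have "y (sw S) = (\<Sum>a\<in>?A. - (x a * ev a S))"
          unfolding y_def
        proof (rule sum.cong[OF refl])
          fix a assume "a \<in> ?A"
          hence "sw (rep a) \<noteq> rep a" using rep_props NS_ne by blast
          thus "x a * ev a (sw S) = - (x a * ev a S)" by (simp add: ev_sw)
        qed
        thus ?thesis unfolding y_def by (simp add: sum_negf)
      qed
      have supp: "\<forall>S\<in>?X. card S \<noteq> k \<longrightarrow> y S = 0"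
      proof (intro ballI impI)
        fix S assume "S \<in> ?X" "card S \<noteq> k"
        have "ev a S = 0" if "a \<in> ?A" for a
        proof -
          have "card (rep a) = k" using rep_props(1)[OF that] by (simp add: NS_def)
          hence "S \<noteq> rep a" "S \<noteq> sw (rep a)" using \<open>card S \<noteq> k\<close> card_sw by auto
          thus ?thesis by (simp add: ev_def)
        qed
        thus "y S = 0" unfolding y_def by simp
      qed
      have UA: "Uo n y (sw M) = - Uo n y M" for M
      proof -
        have "Uo n y (sw M) = Uo n (\<lambda>S. - y S) M" using Uo_sw[of n y M] anti by simp
        also have "\<dots> = - Uo n y M" unfolding Uo_def sum_negf[symmetric] by (rule sum.cong) auto
        finally show ?thesis .
      qed
      have Z: "\<forall>M\<in>?X. Uo n y M = 0"
      proof
        fix M assume M: "M \<in> ?X"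
        show "Uo n y M = 0"
        proof (cases "card M = Suc k")
          case False
          show ?thesis unfolding Uo_def
          proof (rule sum.neutral, rule ballI)
            fix c assume "c \<in> Cn n"
            show "(if c \<in> M \<and> M - {c} \<in> ?X then y (M - {c}) else 0) = 0"
            proof (cases "c \<in> M \<and> M - {c} \<in> ?X")
              case True
              have "finite M" using M Xb_finite_mem by blast
              hence "card (M - {c}) = card M - 1" using True by (simp add: card_Diff_singleton)
              moreover have "card M > 0" using True \<open>finite M\<close> card_gt_0_iff by blast
              ultimately have "card (M - {c}) \<noteq> k" using False by simp
              thus ?thesis using supp True by simp
            qed auto
          qed
        next
          case True
          show ?thesis
          proof (cases "symm M")
            case True
            hence "sw M = M" by (simp add: symm_sw)
            thus ?thesis using UA[of M] by simp
          next
            case False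
            hence MN: "M \<in> NS n (Suc k)" using M \<open>card M = Suc k\<close> by (simp add: NS_def)
            hence oB: "orb M \<in> ?B" by (simp add: Ob_def)
            have "Uo n y (rep (orb M)) = 0" using H oB lin by simp
            moreover have "rep (orb M) = M \<or> rep (orb M) = sw M"
              using rep_props(2)[OF oB] by (auto simp: orb_def doubleton_eq_iff)
            ultimately show ?thesis using UA[of M] by auto
          qed
        qed
      qed
      have y0: "\<forall>S\<in>?X. y S = 0" by (rule inj_U[OF k supp Z])
      show "\<forall>a\<in>?A. x a = 0"
      proof
        fix a assume aA: "a \<in> ?A"
        have ra: "rep a \<in> NS n k" "a = orb (rep a)" using rep_props[OF aA] by auto
        have others: "ev b (rep a) = 0" if "b \<in> ?A - {a}" for b
        proof -
          have rb: "b = orb (rep b)" using rep_props that by blast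
          have "rep a \<noteq> rep b" using that ra rb by auto
          moreover have "rep a \<noteq> sw (rep b)" using that ra rb orb_sw by (metis DiffD2 singletonI)
          ultimately show ?thesis by (simp add: ev_def)
        qed
        have "y (rep a) = x a * ev a (rep a) + (\<Sum>b\<in>?A - {a}. x b * ev b (rep a))"
          unfolding y_def by (rule sum.remove[OF finite_Ob aA])
        also have "(\<Sum>b\<in>?A - {a}. x b * ev b (rep a)) = 0" using others by simp
        finally have "y (rep a) = x a" by (simp add: ev_def)
        moreover have "rep a \<in> ?X" using ra by (simp add: NS_def)
        ultimately show "x a = 0" using y0 by simp
      qed
    qed
  qed
  thus ?thesis using card_NS_Ob[of n k] card_NS_Ob[of n "Suc k"] by simp
qed



lemma aux1: "k + 1 \<le> N div 2 \<Longrightarrow> 2*k < (N::nat)"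
  using div_mult_mod_eq[of N 2] by linarith
lemma aux2: "N div 2 \<le> k \<Longrightarrow> k + 1 \<le> N \<Longrightarrow> 2*(N - (k+1)) < (N::nat)"
  using div_mult_mod_eq[of N 2] mod_less_divisor[of 2 N] by linarith

theorem theorem4p1:
  fixes n :: nat
  assumes "n \<ge> 1"
  defines "P \<equiv> gauss_binom_2n_n n - odd_dist_prod n"
  shows "degree P \<le> n^2
    \<and> (\<forall>k\<le>n^2. coeff P k = coeff P (n^2 - k))
    \<and> (\<forall>k. k + 1 \<le> n^2 div 2 \<longrightarrow> coeff P k \<le> coeff P (k + 1))
    \<and> (\<forall>k. n^2 div 2 \<le> k \<and> k + 1 \<le> n^2 \<longrightarrow> coeff P k \<ge> coeff P (k + 1))"
proof -
  have cP: "coeff P k = int (card (NS n k))" for k unfolding P_def gauss_eq odd_eq by (rule coeffP)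
  have N: "n^2 = n*n" by (simp add: power2_eq_square)
  have d: "degree P \<le> n^2" by (rule degree_le) (auto simp: cP N NS_big)
  have s: "\<forall>k\<le>n^2. coeff P k = coeff P (n^2 - k)"
  proof (intro allI impI)
    fix k assume "k \<le> n^2"
    hence "card (NS n k) = card (NS n (n*n - k))" using N by (intro NS_sym) simp
    thus "coeff P k = coeff P (n^2 - k)" unfolding cP N by simp
  qed
  have u: "\<forall>k. k + 1 \<le> n^2 div 2 \<longrightarrow> coeff P k \<le> coeff P (k + 1)"
  proof (intro allI impI)
    fix k assume "k + 1 \<le> n^2 div 2"
    hence "2*k < n*n" using aux1 N by simp
    thus "coeff P k \<le> coeff P (k + 1)" using unimod[of k n] by (simp add: cP)
  qed
  have v: "\<forall>k. n^2 div 2 \<le> k \<and> k + 1 \<le> n^2 \<longrightarrow> coeff P k \<ge> coeff P (k + 1)"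
  proof (intro allI impI)
    fix k assume h: "n^2 div 2 \<le> k \<and> k + 1 \<le> n^2"
    define k' where "k' = n*n - (k+1)"
    have "2*k' < n*n" using aux2[of "n*n" k] h N by (simp add: k'_def)
    hence "card (NS n k') \<le> card (NS n (Suc k'))" by (rule unimod)
    moreover have "card (NS n (k+1)) = card (NS n k')"
      unfolding k'_def by (rule NS_sym) (use h N in simp)
    moreover have "Suc k' = n*n - k" using h N unfolding k'_def by (simp add: Suc_diff_Suc)
    moreover have "card (NS n k) = card (NS n (n*n - k))"
      by (rule NS_sym) (use h N in simp)
    ultimately show "coeff P k \<ge> coeff P (k + 1)" by (simp add: cP)
  qed
  show ?thesis using d s u v by blast
qed

end
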